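(* Let $\mathcal R$ and $\mathcal S$ be TRSs which are equivalent modulo $\mathcal B$ (i.e. $\leftrightarrow^*_{\mathcal R\cup\mathcal B}=\leftrightarrow^*_{\mathcal S\cup\mathcal B}$) and canonical modulo $\mathcal B$. If there is a $\mathcal B$-compatible reduction order $>$ with $\ell>r$ for all rules $\ell\to r\in\mathcal R\cup\mathcal S$, then every rule of $\mathcal R$ has a right-$\mathcal B$-equivalent variant in $\mathcal S$ and vice versa.
   Context: Terms over a signature $\mathcal F$; $\to_{\mathcal R}$ is the usual rewrite relation, $\leftarrow$ its inverse. $\mathcal B$ is a fixed ES with $\mathrm{Var}(\ell)=\mathrm{Var}(r)$ for all $\ell\approx r\in\mathcal B$, $\sim_{\mathcal B}=\leftrightarrow^*_{\mathcal B}$, $\to_{\mathcal R/\mathcal B}=\sim_{\mathcal B}\cdot\to_{\mathcal R}\cdot\sim_{\mathcal B}$. Terminating modulo $\mathcal B$: no infinite $\to_{\mathcal R/\mathcal B}$-sequence; Church–Rosser modulo $\mathcal B$: $\leftrightarrow^*_{\mathcal R\cup\mathcal B}\subseteq\to^*_{\mathcal R}\cdot\sim_{\mathcal B}\cdot\leftarrow^*_{\mathcal R}$; complete modulo $\mathcal B$: both. A TRS is left-reduced if for every rule $\ell\to r$, $\ell$ is a normal form of the TRS without that rule; right-$\mathcal B$-reduced if for every rule $\ell\to r$, $r$ is a normal form of $\to_{\mathcal R/\mathcal B}$; canonical modulo $\mathcal B$ if complete modulo $\mathcal B$, left-reduced and right-$\mathcal B$-reduced. A $\mathcal B$-compatible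 reduction order is a well-founded order on terms closed under contexts and substitutions with $\sim_{\mathcal B}\cdot>\cdot\sim_{\mathcal B}\subseteq>$. Two rules $\ell\to r,\ell'\to r'$ are right-$\mathcal B$-equivalent variants if there is a renaming $\sigma$ with $\ell\sigma=\ell'$ and $r\sigma\sim_{\mathcal B}r'$. *)

theory Defs
  imports Main
begin

datatype ('f, 'v) trm = Var 'v | Fun 'f "('f, 'v) trm list"

fun vars :: "('f, 'v) trm \<Rightarrow> 'v set" where
  "vars (Var x) = {x}"
| "vars (Fun f ts) = (\<Union>t \<in> set ts. vars t)"

fun subst :: "('f, 'v) trm \<Rightarrow> ('v \<Rightarrow> ('f, 'v) trm) \<Rightarrow> ('f, 'v) trm" where
  "subst (Var x) \<sigma> = \<sigma> x"
| "subst (Fun f ts) \<sigma> = Fun f (map (\<lambda>t. subst t \<sigma>) ts)"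

datatype ('f, 'v) ctxt = Hole | More 'f "('f, 'v) trm list" "('f, 'v) ctxt" "('f, 'v) trm list"

primrec ctxt_apply :: "('f, 'v) ctxt \<Rightarrow> ('f, 'v) trm \<Rightarrow> ('f, 'v) trm" where
  "ctxt_apply Hole t = t"
| "ctxt_apply (More f ss C us) t = Fun f (ss @ ctxt_apply C t # us)"

type_synonym ('f, 'v) rule = "('f, 'v) trm \<times> ('f, 'v) trm"

definition renaming :: "('v \<Rightarrow> ('f, 'v) trm) \<Rightarrow> bool" where
  "renaming \<sigma> \<longleftrightarrow> (\<exists>\<pi>. bij \<pi> \<and> \<sigma> = (\<lambda>x. Var (\<pi> x)))"

definition rstep :: "('f, 'v) rule set \<Rightarrow> ('f, 'v) trm rel" where
  "rstep R = {(ctxt_apply C (subst l \<sigma>), ctxt_apply C (subst r \<sigma>)) | C l r \<sigma>. (l, r) \<in> R}"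

definition conv :: "'a rel \<Rightarrow> 'a rel" where
  "conv A = (A \<union> A\<inverse>)\<^sup>*"

definition trs :: "('f, 'v) rule set \<Rightarrow> bool" where
  "trs R \<longleftrightarrow> (\<forall>(l, r) \<in> R. (\<forall>x. l \<noteq> Var x) \<and> vars r \<subseteq> vars l)"

definition var_balanced :: "('f, 'v) rule set \<Rightarrow> bool" where
  "var_balanced B \<longleftrightarrow> (\<forall>(l, r) \<in> B. vars l = vars r)"

definition Beq :: "('f, 'v) rule set \<Rightarrow> ('f, 'v) trm rel" where
  "Beq B = conv (rstep B)"

definition rel_step :: "('f, 'v) rule set \<Rightarrow> ('f, 'v) rule set \<Rightarrow> ('f, 'v) trm rel" where
  "rel_step R B = Beq B O rstep R O Beq B"

definition NF :: "'a rel \<Rightarrow> 'a set" where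
  "NF A = {x. \<not> (\<exists>y. (x, y) \<in> A)}"

definition SN :: "'a rel \<Rightarrow> bool" where
  "SN A \<longleftrightarrow> \<not> (\<exists>f. \<forall>i. (f i, f (Suc i)) \<in> A)"

definition terminating_mod :: "('f, 'v) rule set \<Rightarrow> ('f, 'v) rule set \<Rightarrow> bool" where
  "terminating_mod R B \<longleftrightarrow> SN (rel_step R B)"

definition CR_mod :: "('f, 'v) rule set \<Rightarrow> ('f, 'v) rule set \<Rightarrow> bool" where
  "CR_mod R B \<longleftrightarrow>
     conv (rstep (R \<union> B)) \<subseteq> (rstep R)\<^sup>* O Beq B O ((rstep R)\<inverse>)\<^sup>*"

definition complete_mod :: "('f, 'v) rule set \<Rightarrow> ('f, 'v) rule set \<Rightarrow> bool" where
  "complete_mod R B \<longleftrightarrow> terminating_mod R B \<and> CR_mod R B"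

definition left_reduced :: "('f, 'v) rule set \<Rightarrow> bool" where
  "left_reduced R \<longleftrightarrow> (\<forall>(l, r) \<in> R. l \<in> NF (rstep (R - {(l, r)})))"

definition right_B_reduced :: "('f, 'v) rule set \<Rightarrow> ('f, 'v) rule set \<Rightarrow> bool" where
  "right_B_reduced R B \<longleftrightarrow> (\<forall>(l, r) \<in> R. r \<in> NF (rel_step R B))"

definition canonical_mod :: "('f, 'v) rule set \<Rightarrow> ('f, 'v) rule set \<Rightarrow> bool" where
  "canonical_mod R B \<longleftrightarrow> complete_mod R B \<and> left_reduced R \<and> right_B_reduced R B"

definition equivalent_mod :: "('f, 'v) rule set \<Rightarrow> ('f, 'v) rule set \<Rightarrow> ('f, 'v) rule set \<Rightarrow> bool" where
  "equivalent_mod R S B \<longleftrightarrow> conv (rstep (R \<union> B)) = conv (rstep (S \<union> B))"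

definition B_compatible_reduction_order :: "('f, 'v) rule set \<Rightarrow> ('f, 'v) trm rel \<Rightarrow> bool" where
  "B_compatible_reduction_order B gt \<longleftrightarrow>
     irrefl gt \<and> trans gt \<and> SN gt \<and>
     (\<forall>s t C. (s, t) \<in> gt \<longrightarrow> (ctxt_apply C s, ctxt_apply C t) \<in> gt) \<and>
     (\<forall>s t \<sigma>. (s, t) \<in> gt \<longrightarrow> (subst s \<sigma>, subst t \<sigma>) \<in> gt) \<and>
     Beq B O gt O Beq B \<subseteq> gt"

definition right_B_equiv_variant ::
  "('f, 'v) rule set \<Rightarrow> ('f, 'v) rule \<Rightarrow> ('f, 'v) rule \<Rightarrow> bool" where
  "right_B_equiv_variant B \<rho> \<rho>' \<longleftrightarrow>
     (\<exists>\<sigma>. renaming \<sigma> \<and> subst (fst \<rho>) \<sigma> = fst \<rho>' \<and> (subst (snd \<rho>) \<sigma>, snd \<rho>') \<in> Beq B)"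

end

theory Submission
  imports Defs
begin

fun tsize :: "('f, 'v) trm \<Rightarrow> nat" where
  "tsize (Var x) = 1"
| "tsize (Fun f ts) = 1 + sum_list (map tsize ts)"

lemma subst_subst: "subst (subst t \<sigma>) \<tau> = subst t (\<lambda>x. subst (\<sigma> x) \<tau>)"
  by (induction t) auto

lemma subst_Var[simp]: "subst t Var = t"
  by (induction t) (auto intro: map_idI)

lemma subst_cong: "(\<And>x. x \<in> vars t \<Longrightarrow> \<sigma> x = \<tau> x) \<Longrightarrow> subst t \<sigma> = subst t \<tau>"
  by (induction t) auto

lemma map_self: "map f xs = xs \<Longrightarrow> x \<in> set xs \<Longrightarrow> f x = x"
  by (induction xs) auto

lemma subst_id_vars: "subst t \<theta> = t \<Longrightarrow> x \<in> vars t \<Longrightarrow> \<theta> x = Var x"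
proof (induction t)
  case (Var y) then show ?case by simp
next
  case (Fun f ts)
  then obtain t where t: "t \<in> set ts" "x \<in> vars t" by auto
  from Fun.prems have "map (\<lambda>t. subst t \<theta>) ts = ts" by simp
  with t have "subst t \<theta> = t" using map_self by metis
  with Fun.IH t show ?case by blast
qed

lemma finite_vars: "finite (vars t)"
  by (induction t) auto

lemma tsize_subst: "tsize t \<le> tsize (subst t \<sigma>)"
proof (induction t)
  case (Var x) then show ?case by (cases "\<sigma> x") auto
next
  case (Fun f ts)
  have "sum_list (map tsize ts) \<le> sum_list (map (\<lambda>t. tsize (subst t \<sigma>)) ts)"
    by (rule sum_list_mono) (use Fun in auto)
  then show ?case by (simp add: comp_def)
qed

lemma tsize_ctxt: "tsize t \<le> tsize (ctxt_apply C t)"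
  by (induction C) auto

lemma tsize_ctxt_strict: "C \<noteq> Hole \<Longrightarrow> tsize t < tsize (ctxt_apply C t)"
proof (cases C)
  case (More f ss D us)
  then show ?thesis using tsize_ctxt[of t D] by auto
qed simp

lemma ctxt_subst: "\<exists>D'. subst (ctxt_apply D s) \<sigma> = ctxt_apply D' (subst s \<sigma>)"
proof (induction D)
  case Hole then show ?case by (metis ctxt_apply.simps(1))
next
  case (More f ss D us)
  then obtain D' where "subst (ctxt_apply D s) \<sigma> = ctxt_apply D' (subst s \<sigma>)" by blast
  then show ?case
    by (intro exI[of _ "More f (map (\<lambda>t. subst t \<sigma>) ss) D' (map (\<lambda>t. subst t \<sigma>) us)"]) simp
qed

lemma ctxt_comp: "\<exists>E. ctxt_apply C (ctxt_apply D s) = ctxt_apply E s"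
proof (induction C)
  case Hole then show ?case by auto
next
  case (More f ss C us)
  then obtain E where "ctxt_apply C (ctxt_apply D s) = ctxt_apply E s" by blast
  then show ?case by (intro exI[of _ "More f ss E us"]) simp
qed

lemma rstepI: "(l, r) \<in> R \<Longrightarrow> s = ctxt_apply C (subst l \<sigma>) \<Longrightarrow> t = ctxt_apply C (subst r \<sigma>) \<Longrightarrow> (s, t) \<in> rstep R"
  unfolding rstep_def by blast

lemma rstepE: "(s, t) \<in> rstep R \<Longrightarrow> (\<And>C l r \<sigma>. (l, r) \<in> R \<Longrightarrow> s = ctxt_apply C (subst l \<sigma>) \<Longrightarrow> t = ctxt_apply C (subst r \<sigma>) \<Longrightarrow> P) \<Longrightarrow> P"
  unfolding rstep_def by blast

lemma rstep_closed: "(s, t) \<in> rstep R \<Longrightarrow> (ctxt_apply C (subst s \<sigma>), ctxt_apply C (subst t \<sigma>)) \<in> rstep R"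
proof (erule rstepE)
  fix D l r \<tau> assume lr: "(l, r) \<in> R" and s: "s = ctxt_apply D (subst l \<tau>)" and t: "t = ctxt_apply D (subst r \<tau>)"
  obtain D' where D': "\<And>u. subst (ctxt_apply D u) \<sigma> = ctxt_apply D' (subst u \<sigma>)"
  proof -
    have "\<exists>D'. \<forall>u. subst (ctxt_apply D u) \<sigma> = ctxt_apply D' (subst u \<sigma>)"
    proof (induction D)
      case Hole then show ?case by (metis ctxt_apply.simps(1))
    next
      case (More f ss D us)
      then obtain D' where "\<forall>u. subst (ctxt_apply D u) \<sigma> = ctxt_apply D' (subst u \<sigma>)" by blast
      then show ?case
        by (intro exI[of _ "More f (map (\<lambda>t. subst t \<sigma>) ss) D' (map (\<lambda>t. subst t \<sigma>) us)"]) simp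
    qed
    then show ?thesis using that by blast
  qed
  obtain E where E: "\<And>u. ctxt_apply C (ctxt_apply D' u) = ctxt_apply E u"
  proof -
    have "\<exists>E. \<forall>u. ctxt_apply C (ctxt_apply D' u) = ctxt_apply E u"
    proof (induction C)
      case Hole then show ?case by auto
    next
      case (More f ss C us)
      then obtain E where "\<forall>u. ctxt_apply C (ctxt_apply D' u) = ctxt_apply E u" by blast
      then show ?case by (intro exI[of _ "More f ss E us"]) simp
    qed
    then show ?thesis using that by blast
  qed
  show ?thesis
    by (rule rstepI[OF lr, of _ E "\<lambda>x. subst (\<tau> x) \<sigma>"]) (simp_all add: s t D' E subst_subst)
qed

lemma rstep_mono: "R \<subseteq> R' \<Longrightarrow> rstep R \<subseteq> rstep R'"
  unfolding rstep_def by blast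

lemma conv_sym: "(a, b) \<in> conv A \<Longrightarrow> (b, a) \<in> conv A"
proof -
  have "sym (conv A)" unfolding conv_def by (rule sym_rtrancl) (auto simp: sym_def)
  then show "(a, b) \<in> conv A \<Longrightarrow> (b, a) \<in> conv A" by (auto simp: sym_def)
qed

lemma conv_trans: "(a, b) \<in> conv A \<Longrightarrow> (b, c) \<in> conv A \<Longrightarrow> (a, c) \<in> conv A"
  unfolding conv_def by simp

lemma steps_conv: "(a, b) \<in> A\<^sup>* \<Longrightarrow> (a, b) \<in> conv A"
  unfolding conv_def using rtrancl_mono[of A "A \<union> A\<inverse>"] by blast

lemma NF_steps: "x \<in> NF A \<Longrightarrow> (x, y) \<in> A\<^sup>* \<Longrightarrow> y = x"
  unfolding NF_def by (auto elim: converse_rtranclE)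

lemma SN_NF: assumes "SN A" shows "\<exists>u. (x, u) \<in> A\<^sup>* \<and> u \<in> NF A"
proof -
  have wf: "wf (A\<inverse>)" using assms unfolding SN_def wf_iff_no_infinite_down_chain by simp
  show ?thesis
  proof (induction x rule: wf_induct[OF wf])
    case (1 x)
    show ?case
    proof (cases "x \<in> NF A")
      case True then show ?thesis by blast
    next
      case False
      then obtain y where y: "(x, y) \<in> A" unfolding NF_def by blast
      with 1 obtain u where "(y, u) \<in> A\<^sup>*" "u \<in> NF A" by blast
      with y show ?thesis by (meson converse_rtrancl_into_rtrancl)
    qed
  qed
qed

lemma Beq_refl: "(x, x) \<in> Beq B"
  unfolding Beq_def conv_def by simp

lemma rstep_rel_step: "rstep R \<subseteq> rel_step R B"
  unfolding rel_step_def by (auto intro!: relcompI Beq_refl)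

lemma NF_rel_step: "x \<in> NF (rel_step R B) \<Longrightarrow> x \<in> NF (rstep R)"
  using rstep_rel_step unfolding NF_def by blast

lemma extend_bij:
  fixes f :: "'a \<Rightarrow> 'a"
  assumes "finite A" shows "inj_on f A \<Longrightarrow> \<exists>\<pi>. bij \<pi> \<and> (\<forall>x\<in>A. \<pi> x = f x)"
  using assms
proof (induction A arbitrary: f rule: finite_induct)
  case empty then show ?case using bij_id by blast
next
  case (insert a A)
  have "inj_on f A" using insert.prems by (simp add: inj_on_insert)
  then obtain \<pi> where \<pi>: "bij \<pi>" "\<forall>x\<in>A. \<pi> x = f x" using insert.IH by blast
  define sw where "sw = (\<lambda>y. if y = \<pi> a then f a else if y = f a then \<pi> a else y)"
  have "sw \<circ> sw = id" unfolding sw_def by auto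
  then have "bij sw" using o_bij by blast
  moreover have "\<forall>x\<in>insert a A. (sw \<circ> \<pi>) x = f x"
  proof
    fix x assume x: "x \<in> insert a A"
    show "(sw \<circ> \<pi>) x = f x"
    proof (cases "x = a")
      case True then show ?thesis by (simp add: sw_def)
    next
      case False
      with x have xA: "x \<in> A" by simp
      have "f x \<noteq> f a" using insert.prems insert.hyps xA False by (auto simp: inj_on_def)
      moreover have "f x \<noteq> \<pi> a"
      proof
        assume "f x = \<pi> a"
        then have "\<pi> x = \<pi> a" using \<pi> xA by simp
        then have "x = a" using \<pi>(1) by (simp add: bij_def inj_eq)
        with False show False by simp
      qed
      ultimately show ?thesis using \<pi> xA by (simp add: sw_def)
    qed
  qed
  ultimately show ?case using \<pi>(1) bij_comp by blast
qed

lemma rstep_gt: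
  assumes "B_compatible_reduction_order B gt" "\<forall>(l, r) \<in> S. (l, r) \<in> gt"
  shows "rstep S \<subseteq> gt"
proof
  fix p assume "p \<in> rstep S"
  then obtain s t where p: "p = (s, t)" "(s, t) \<in> rstep S" by (cases p) auto
  from p(2) show "p \<in> gt" unfolding p(1)
  proof (rule rstepE)
    fix C l r \<sigma> assume "(l, r) \<in> S" "s = ctxt_apply C (subst l \<sigma>)" "t = ctxt_apply C (subst r \<sigma>)"
    moreover have c: "\<forall>s t C. (s, t) \<in> gt \<longrightarrow> (ctxt_apply C s, ctxt_apply C t) \<in> gt"
      and su: "\<forall>s t \<sigma>. (s, t) \<in> gt \<longrightarrow> (subst s \<sigma>, subst t \<sigma>) \<in> gt"
      using assms(1) unfolding B_compatible_reduction_order_def by simp_all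
    ultimately show "(s, t) \<in> gt" using assms(2) by auto
  qed
qed

lemma lhs_reducible:
  assumes eq: "equivalent_mod R S B" and can: "canonical_mod S B"
    and ord: "B_compatible_reduction_order B gt"
    and gtR: "\<forall>(l, r) \<in> R \<union> S. (l, r) \<in> gt" and lr: "(l, r) \<in> R"
  shows "l \<notin> NF (rstep S)"
proof
  assume lNF: "l \<in> NF (rstep S)"
  have SN: "SN (rstep S)"
  proof -
    have "SN (rel_step S B)" using can unfolding canonical_mod_def complete_mod_def terminating_mod_def by blast
    then show ?thesis using rstep_rel_step[of S B] unfolding SN_def by blast
  qed
  obtain u where ru: "(r, u) \<in> (rstep S)\<^sup>*" and uNF: "u \<in> NF (rstep S)" using SN_NF[OF SN] by blast
  have "(l, r) \<in> rstep R" using rstepI[OF lr, of l Hole Var r] by simp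
  then have "(l, r) \<in> rstep (R \<union> B)" using rstep_mono[of R "R \<union> B"] by blast
  then have "(l, r) \<in> conv (rstep (R \<union> B))" by (intro steps_conv r_into_rtrancl)
  then have lr': "(l, r) \<in> conv (rstep (S \<union> B))" using eq unfolding equivalent_mod_def by simp
  have "(rstep S)\<^sup>* \<subseteq> (rstep (S \<union> B))\<^sup>*" by (rule rtrancl_mono[OF rstep_mono]) simp
  with ru have "(r, u) \<in> (rstep (S \<union> B))\<^sup>*" by blast
  then have "(r, u) \<in> conv (rstep (S \<union> B))" by (rule steps_conv)
  with lr' have "(l, u) \<in> conv (rstep (S \<union> B))" by (rule conv_trans)
  then have "(l, u) \<in> (rstep S)\<^sup>* O Beq B O ((rstep S)\<inverse>)\<^sup>*"
    using can unfolding canonical_mod_def complete_mod_def CR_mod_def by blast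
  then obtain a b where a: "(l, a) \<in> (rstep S)\<^sup>*" and ab: "(a, b) \<in> Beq B"
    and b: "(b, u) \<in> ((rstep S)\<inverse>)\<^sup>*" by blast
  from lNF a have "a = l" by (rule NF_steps)
  from b have "(u, b) \<in> (rstep S)\<^sup>*" unfolding rtrancl_converse by blast
  with uNF have "b = u" by (intro NF_steps)
  have lu: "(l, u) \<in> Beq B" using ab \<open>a = l\<close> \<open>b = u\<close> by simp
  then have ul: "(u, l) \<in> Beq B" unfolding Beq_def by (rule conv_sym)
  have gtS: "\<forall>(l, r) \<in> S. (l, r) \<in> gt" using gtR by blast
  have trans: "trans gt" and irr: "irrefl gt" and comp: "Beq B O gt O Beq B \<subseteq> gt"
    using ord unfolding B_compatible_reduction_order_def by simp_all
  have "(rstep S)\<^sup>* \<subseteq> gt\<^sup>*" by (rule rtrancl_mono[OF rstep_gt[OF ord gtS]])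
  with ru have "(r, u) \<in> gt\<^sup>*" by blast
  then have "(r, u) \<in> gt\<^sup>=" using trans rtrancl_trancl_reflcl[of gt] trancl_id[of gt] by simp
  moreover have "(l, r) \<in> gt" using gtR lr by blast
  ultimately have "(l, u) \<in> gt" using trans unfolding trans_def by blast
  with ul have "(u, u) \<in> Beq B O gt O Beq B" using Beq_refl by (intro relcompI)
  then have "(u, u) \<in> gt" using comp by blast
  then show False using irr unfolding irrefl_def by blast
qed


lemma reducible_transfer:
  assumes h: "\<forall>(l, r) \<in> S. l \<notin> NF (rstep R)" and t: "t \<notin> NF (rstep S)"
  shows "t \<notin> NF (rstep R)"
proof -
  from t obtain y where "(t, y) \<in> rstep S" unfolding NF_def by blast
  then obtain C l r \<sigma> where lr: "(l, r) \<in> S" and tC: "t = ctxt_apply C (subst l \<sigma>)"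
    by (elim rstepE) blast
  from h lr have "l \<notin> NF (rstep R)" by blast
  then obtain z where "(l, z) \<in> rstep R" unfolding NF_def by blast
  then have "(ctxt_apply C (subst l \<sigma>), ctxt_apply C (subst z \<sigma>)) \<in> rstep R" by (rule rstep_closed)
  then show ?thesis using tC unfolding NF_def by blast
qed

lemma R_to_conv:
  assumes eq: "equivalent_mod R S B" and st: "(s, t) \<in> rstep R"
  shows "(s, t) \<in> conv (rstep (S \<union> B))"
proof -
  have "(s, t) \<in> rstep (R \<union> B)" using rstep_mono[of R "R \<union> B"] st by blast
  then have "(s, t) \<in> conv (rstep (R \<union> B))" by (intro steps_conv r_into_rtrancl)
  then show ?thesis using eq unfolding equivalent_mod_def by simp
qed

lemma one_dir:
  fixes R S B :: "('f, 'v) rule set" and gt :: "('f, 'v) trm rel"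
  assumes eq: "equivalent_mod R S B" and canR: "canonical_mod R B" and canS: "canonical_mod S B"
    and ord: "B_compatible_reduction_order B gt"
    and gtRS: "\<forall>(l, r) \<in> R \<union> S. (l, r) \<in> gt" and lr: "(l, r) \<in> R"
  shows "\<exists>\<rho>' \<in> S. right_B_equiv_variant B (l, r) \<rho>'"
proof -
  have eq': "equivalent_mod S R B" using eq by (simp add: equivalent_mod_def)
  have gtSR: "\<forall>(l, r) \<in> S \<union> R. (l, r) \<in> gt" using gtRS by (simp add: Un_commute)
  have hS: "\<forall>(l', r') \<in> S. l' \<notin> NF (rstep R)"
    using lhs_reducible[OF eq' canR ord gtSR] by blast
  have hR: "\<forall>(l', r') \<in> R. l' \<notin> NF (rstep S)"
    using lhs_reducible[OF eq canS ord gtRS] by blast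
  from hR lr have "l \<notin> NF (rstep S)" by blast
  then obtain y where "(l, y) \<in> rstep S" unfolding NF_def by blast
  then obtain C l' r' \<sigma> where l'r': "(l', r') \<in> S" and lC: "l = ctxt_apply C (subst l' \<sigma>)"
    by (elim rstepE) blast
  from hS l'r' have "l' \<notin> NF (rstep R)" by blast
  then obtain z where "(l', z) \<in> rstep R" unfolding NF_def by blast
  then obtain D l'' r'' \<tau> where l''r'': "(l'', r'') \<in> R" and l'D: "l' = ctxt_apply D (subst l'' \<tau>)"
    by (elim rstepE) blast
  have eqlr: "(l'', r'') = (l, r)"
  proof (rule ccontr)
    assume ne: "(l'', r'') \<noteq> (l, r)"
    then have "(l'', r'') \<in> R - {(l, r)}" using l''r'' by blast
    from rstepI[OF this l'D refl]
    have "(ctxt_apply C (subst l' \<sigma>), ctxt_apply C (subst (ctxt_apply D (subst r'' \<tau>)) \<sigma>)) \<in> rstep (R - {(l, r)})"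
      by (rule rstep_closed)
    then have "l \<notin> NF (rstep (R - {(l, r)}))" using lC unfolding NF_def by auto
    moreover have "l \<in> NF (rstep (R - {(l, r)}))"
      using canR lr unfolding canonical_mod_def left_reduced_def by blast
    ultimately show False by blast
  qed
  then have l''l: "l'' = l" by simp
  have s1: "tsize (subst l' \<sigma>) \<le> tsize l" using lC tsize_ctxt by metis
  have s2: "tsize l' \<le> tsize (subst l' \<sigma>)" by (rule tsize_subst)
  have s3: "tsize (subst l \<tau>) \<le> tsize l'" using l'D l''l tsize_ctxt by metis
  have s4: "tsize l \<le> tsize (subst l \<tau>)" by (rule tsize_subst)
  have CH: "C = Hole"
  proof (rule ccontr)
    assume "C \<noteq> Hole"
    then have "tsize (subst l' \<sigma>) < tsize l" using lC tsize_ctxt_strict by metis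
    with s2 s3 s4 show False by linarith
  qed
  have DH: "D = Hole"
  proof (rule ccontr)
    assume "D \<noteq> Hole"
    then have "tsize (subst l \<tau>) < tsize l'" using l'D l''l tsize_ctxt_strict by metis
    with s1 s2 s4 show False by linarith
  qed
  have l1: "subst l' \<sigma> = l" using lC CH by simp
  have l2: "l' = subst l \<tau>" using l'D DH l''l by simp
  have idl: "subst l (\<lambda>x. subst (\<tau> x) \<sigma>) = l" using l1 l2 subst_subst by metis
  have "\<forall>x\<in>vars l. \<exists>y. \<tau> x = Var y \<and> \<sigma> y = Var x"
  proof
    fix x assume x: "x \<in> vars l"
    have h: "subst (\<tau> x) \<sigma> = Var x" using subst_id_vars[OF idl x] .
    show "\<exists>y. \<tau> x = Var y \<and> \<sigma> y = Var x"
    proof (cases "\<tau> x")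
      case (Var y) with h show ?thesis by auto
    next
      case (Fun g ts) with h show ?thesis by simp
    qed
  qed
  then obtain f where f: "\<forall>x\<in>vars l. \<tau> x = Var (f x) \<and> \<sigma> (f x) = Var x" by metis
  have inj: "inj_on f (vars l)"
  proof (rule inj_onI)
    fix x x' assume "x \<in> vars l" "x' \<in> vars l" "f x = f x'"
    then show "x = x'" using f by (metis trm.inject(1))
  qed
  obtain \<pi> where \<pi>: "bij \<pi>" "\<forall>x\<in>vars l. \<pi> x = f x" using extend_bij[OF finite_vars inj] by blast
  define \<rho> :: "'v \<Rightarrow> ('f, 'v) trm" where "\<rho> = (\<lambda>x. Var (\<pi> x))"
  have ren: "renaming \<rho>" unfolding renaming_def \<rho>_def using \<pi>(1) by blast
  have "subst l \<rho> = subst l \<tau>"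
    by (rule subst_cong) (use f \<pi> in \<open>simp add: \<rho>_def\<close>)
  then have l\<rho>: "subst l \<rho> = l'" using l2 by simp
  have rNF: "r \<in> NF (rstep R)"
    using canR lr NF_rel_step unfolding canonical_mod_def right_B_reduced_def by blast
  have r\<rho>R: "subst r \<rho> \<in> NF (rstep R)"
  proof (rule ccontr)
    assume "subst r \<rho> \<notin> NF (rstep R)"
    then obtain w where "(subst r \<rho>, w) \<in> rstep R" unfolding NF_def by blast
    then have "(ctxt_apply Hole (subst (subst r \<rho>) (\<lambda>x. Var (inv \<pi> x))),
                ctxt_apply Hole (subst w (\<lambda>x. Var (inv \<pi> x)))) \<in> rstep R"
      by (rule rstep_closed)
    moreover have "subst (subst r \<rho>) (\<lambda>x. Var (inv \<pi> x)) = r"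
    proof -
      have "(\<lambda>x. subst (\<rho> x) (\<lambda>x. Var (inv \<pi> x))) = Var"
        using \<pi>(1) by (auto simp: \<rho>_def bij_def inv_f_f)
      then show ?thesis by (simp add: subst_subst)
    qed
    ultimately have "(r, subst w (\<lambda>x. Var (inv \<pi> x))) \<in> rstep R" by simp
    with rNF show False unfolding NF_def by blast
  qed
  have r\<rho>S: "subst r \<rho> \<in> NF (rstep S)" using reducible_transfer[OF hS] r\<rho>R by blast
  have r'NF: "r' \<in> NF (rstep S)"
    using canS l'r' NF_rel_step unfolding canonical_mod_def right_B_reduced_def by blast
  have "(l', subst r \<rho>) \<in> rstep R" using rstepI[OF lr, of l' Hole \<rho> "subst r \<rho>"] l\<rho> by simp
  then have c1: "(l', subst r \<rho>) \<in> conv (rstep (S \<union> B))" by (rule R_to_conv[OF eq])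
  have "(l', r') \<in> rstep S" using rstepI[OF l'r', of l' Hole Var r'] by simp
  then have "(l', r') \<in> rstep (S \<union> B)" using rstep_mono[of S "S \<union> B"] by blast
  then have c2: "(l', r') \<in> conv (rstep (S \<union> B))" by (intro steps_conv r_into_rtrancl)
  have "(subst r \<rho>, r') \<in> conv (rstep (S \<union> B))" by (rule conv_trans[OF conv_sym[OF c1] c2])
  then have "(subst r \<rho>, r') \<in> (rstep S)\<^sup>* O Beq B O ((rstep S)\<inverse>)\<^sup>*"
    using canS unfolding canonical_mod_def complete_mod_def CR_mod_def by blast
  then obtain a b where a: "(subst r \<rho>, a) \<in> (rstep S)\<^sup>*" and ab: "(a, b) \<in> Beq B"
    and b: "(b, r') \<in> ((rstep S)\<inverse>)\<^sup>*" by blast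
  from r\<rho>S a have "a = subst r \<rho>" by (rule NF_steps)
  from b have "(r', b) \<in> (rstep S)\<^sup>*" unfolding rtrancl_converse by blast
  with r'NF have "b = r'" by (intro NF_steps)
  have "(subst r \<rho>, r') \<in> Beq B" using ab \<open>a = subst r \<rho>\<close> \<open>b = r'\<close> by simp
  then have "right_B_equiv_variant B (l, r) (l', r')"
    unfolding right_B_equiv_variant_def using ren l\<rho> by auto
  then show ?thesis using l'r' by blast
qed

theorem theorem6p18:
  fixes R S B :: "('f, 'v) rule set" and gt :: "('f, 'v) trm rel"
  assumes "infinite (UNIV :: 'v set)"
    and "var_balanced B"
    and "trs R" and "trs S"
    and "equivalent_mod R S B"
    and "canonical_mod R B" and "canonical_mod S B"
    and "B_compatible_reduction_order B gt"
    and "\<forall>(l, r) \<in> R \<union> S. (l, r) \<in> gt"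
  shows "(\<forall>\<rho> \<in> R. \<exists>\<rho>' \<in> S. right_B_equiv_variant B \<rho> \<rho>') \<and>
         (\<forall>\<rho> \<in> S. \<exists>\<rho>' \<in> R. right_B_equiv_variant B \<rho> \<rho>')"
proof -
  have eq': "equivalent_mod S R B" using assms(5) by (simp add: equivalent_mod_def)
  have gtSR: "\<forall>(l, r) \<in> S \<union> R. (l, r) \<in> gt" using assms(9) by (simp add: Un_commute)
  show ?thesis
  proof (intro conjI ballI)
    fix \<rho> assume "\<rho> \<in> R"
    then show "\<exists>\<rho>' \<in> S. right_B_equiv_variant B \<rho> \<rho>'"
      using one_dir[OF assms(5) assms(6) assms(7) assms(8) assms(9)] by (cases \<rho>) auto
  next
    fix \<rho> assume "\<rho> \<in> S"
    then show "\<exists>\<rho>' \<in> R. right_B_equiv_variant B \<rho> \<rho>'"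
      using one_dir[OF eq' assms(7) assms(6) assms(8) gtSR] by (cases \<rho>) auto
  qed
qed

end
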